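(* Let $k$ be a positive integer and $G_1,\dots,G_m$ finite subgraphs of $\mathsf{Path}_{\mathbb Z}$ with $G_1\cup\dots\cup G_m=\mathsf{Path}_k$, and let $g:=\mathrm{gap}(G_1,\dots,G_m)$. Then there exists a shift permutation $\sigma$ of $[m]$ such that \[\vec\lambda(G_{\sigma(1)},\dots,G_{\sigma(m)})\ge\frac{g-\max\{\lambda(G_1),\dots,\lambda(G_m)\}}{2}.\]
   Context: Graphs are finite simple graphs without isolated vertices; $\emptyset$ is the empty graph. $\mathsf{Path}_{\mathbb Z}$ has vertex set $\mathbb Z$ and edges $\{i-1,i\}$; for integers $s<t$, $\mathsf{Path}_{s,t}$ has vertices $s,\dots,t$ and edges $\{i-1,i\}$, $s<i\le t$; $\mathsf{Path}_k=\mathsf{Path}_{0,k}$. $\Delta(G)$ = number of connected components; $\lambda(G)$ = maximum number of edges in a component ($0$ for $\emptyset$); $G\ominus F$ = union of components of $G$ sharing no vertex with $F$. $\vec\Delta(H_1,\dots,H_r)=\sum_l\Delta(H_l\ominus(H_1\cup\dots\cup H_{l-1}))$, $\vec\lambda(H_1,\dots,H_r)=\sum_l\lambda(H_l\ominus(H_1\cup\dots\cup H_{l-1}))$. A shift permutation is a permutation $\sigma$ of $[m]$ with $\sigma(j)\ge j-1$ for all $j$. Gap: let $c=\vec\Delta(G_1,\dots,G_m)$ and $0\le s_1<t_1<\dots<s_c<t_c\le k$ the integers with $\bigcup_{j=1}^m\big(G_j\ominus(G_1\cup\dots\cup G_{j-1})\big)=\bigcup_{i=1}^c\mathsf{Path}_{s_i,t_i}$;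 $\mathrm{gap}(G_1,\dots,G_m):=\max_{y\in[0,k]}\min_{i}\big|\frac{s_i+t_i}{2}-y\big|$. *)

theory Defs
  imports Complex_Main "HOL-Combinatorics.Permutations"
begin

text \<open>A graph without isolated vertices is represented by its edge set; an edge is a
  two-element set of vertices. Vertices are integers.\<close>

type_synonym graph = "int set set"

definition PathZ :: graph where
  "PathZ = {{i - 1, i} | i. True}"

definition Path_st :: "int \<Rightarrow> int \<Rightarrow> graph" where
  "Path_st s t = {{i - 1, i} | i. s < i \<and> i \<le> t}"

definition Path_k :: "nat \<Rightarrow> graph" where
  "Path_k k = Path_st 0 (int k)"

definition verts :: "graph \<Rightarrow> int set" where
  "verts E = \<Union>E"

definition adj :: "graph \<Rightarrow> int \<Rightarrow> int \<Rightarrow> bool" where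
  "adj E u v \<longleftrightarrow> {u, v} \<in> E"

definition comps :: "graph \<Rightarrow> graph set" where
  "comps E = (\<lambda>v. {e \<in> E. \<forall>w\<in>e. (adj E)\<^sup>*\<^sup>* v w}) ` verts E"

definition Delta :: "graph \<Rightarrow> nat" where
  "Delta E = card (comps E)"

definition lam :: "graph \<Rightarrow> nat" where
  "lam E = Max (insert 0 (card ` comps E))"

definition ominus :: "graph \<Rightarrow> graph \<Rightarrow> graph" where
  "ominus G F = \<Union>{C \<in> comps G. verts C \<inter> verts F = {}}"

definition reduced :: "(nat \<Rightarrow> graph) \<Rightarrow> nat \<Rightarrow> graph" where
  "reduced H l = ominus (H l) (\<Union>j\<in>{1..<l}. H j)"

definition vDelta :: "(nat \<Rightarrow> graph) \<Rightarrow> nat \<Rightarrow> nat" where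
  "vDelta H m = (\<Sum>l = 1..m. Delta (reduced H l))"

definition vlam :: "(nat \<Rightarrow> graph) \<Rightarrow> nat \<Rightarrow> nat" where
  "vlam H m = (\<Sum>l = 1..m. lam (reduced H l))"

definition shift_perm :: "nat \<Rightarrow> (nat \<Rightarrow> nat) \<Rightarrow> bool" where
  "shift_perm m \<sigma> \<longleftrightarrow> \<sigma> permutes {1..m} \<and> (\<forall>j\<in>{1..m}. \<sigma> j \<ge> j - 1)"

text \<open>Gap: the union of the reduced graphs is a disjoint union of paths
  Path_{s_i,t_i} (its components); gap = max over y in [0,k] of the distance from y
  to the nearest midpoint (s_i+t_i)/2.\<close>
definition midpt :: "graph \<Rightarrow> real" where
  "midpt C = (real_of_int (Min (verts C)) + real_of_int (Max (verts C))) / 2"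

definition gap :: "nat \<Rightarrow> (nat \<Rightarrow> graph) \<Rightarrow> nat \<Rightarrow> real" where
  "gap k G m = (SUP y\<in>{0..real k}. INF C\<in>comps (\<Union>j\<in>{1..m}. reduced G j). \<bar>midpt C - y\<bar>)"

end

theory Submission
  imports Defs
begin

definition compo :: "graph \<Rightarrow> int \<Rightarrow> graph" where
  "compo E v = {e \<in> E. \<forall>w\<in>e. (adj E)\<^sup>*\<^sup>* v w}"

lemma comps_compo: "comps E = compo E ` verts E"
  by (simp add: comps_def compo_def)

lemma compo_in_comps: "x \<in> verts G \<Longrightarrow> compo G x \<in> comps G"
  by (simp add: comps_compo)

lemma compo_sub: "compo G x \<subseteq> G"
  by (auto simp: compo_def)

lemma comps_sub: "C \<in> comps G \<Longrightarrow> C \<subseteq> G"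
  by (auto simp: comps_compo compo_def)

lemma PathZ_edge: "e \<in> PathZ \<Longrightarrow> x \<in> e \<Longrightarrow> \<exists>y. e = {x, y} \<and> (y = x + 1 \<or> y = x - 1)"
  by (auto simp: PathZ_def)

lemma PathZ_edge2: "{b, c} \<in> PathZ \<Longrightarrow> c = b + 1 \<or> c = b - 1"
  unfolding PathZ_def by (auto simp: doubleton_eq_iff)

lemma adj_sym: "adj G a b = adj G b a"
  by (simp add: adj_def insert_commute)

lemma reach_sym: "(adj G)\<^sup>*\<^sup>* a b \<Longrightarrow> (adj G)\<^sup>*\<^sup>* b a"
proof (induction rule: rtranclp_induct)
  case base then show ?case by simp
next
  case (step y z)
  then show ?case using adj_sym
    by (metis converse_rtranclp_into_rtranclp)
qed

lemma reach_verts: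
  assumes "G \<subseteq> PathZ" "x \<in> verts G" "(adj G)\<^sup>*\<^sup>* x b"
  shows "b \<in> verts (compo G x)"
  using assms(3)
proof (induction rule: rtranclp_induct)
  case base
  from assms(2) obtain e where e: "e \<in> G" "x \<in> e" by (auto simp: verts_def)
  then obtain y where y: "e = {x, y}" using PathZ_edge assms(1) by blast
  have "adj G x y" using e y by (simp add: adj_def)
  then have "e \<in> compo G x" using e y by (auto simp: compo_def)
  then show ?case using e by (auto simp: verts_def)
next
  case (step b c)
  have "(adj G)\<^sup>*\<^sup>* x c" using step.hyps by (rule rtranclp.rtrancl_into_rtrancl)
  then have "{b, c} \<in> compo G x" using step.hyps by (auto simp: compo_def adj_def)
  then show ?case by (auto simp: verts_def)
qed

lemma verts_reach: "u \<in> verts (compo G x) \<Longrightarrow> (adj G)\<^sup>*\<^sup>* x u"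
  by (auto simp: verts_def compo_def)

lemma compo_transfer:
  assumes GP: "G \<subseteq> PathZ" and x: "x \<in> verts G" and CR: "compo G x \<subseteq> R"
    and ne: "\<forall>e\<in>R. e \<noteq> {}"
    and cl: "\<forall>e\<in>R. e \<inter> verts (compo G x) \<noteq> {} \<longrightarrow> e \<in> G"
  shows "compo G x \<in> comps R"
proof -
  let ?C = "compo G x"
  have xC: "x \<in> verts ?C" using reach_verts[OF GP x] by simp
  have xR: "x \<in> verts R" using xC CR by (auto simp: verts_def)
  have 1: "(adj R)\<^sup>*\<^sup>* x w" if "(adj G)\<^sup>*\<^sup>* x w" for w
    using that
  proof (induction rule: rtranclp_induct)
    case base then show ?case by simp
  next
    case (step b c)
    have "(adj G)\<^sup>*\<^sup>* x c" using step.hyps by (rule rtranclp.rtrancl_into_rtrancl)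
    then have "{b, c} \<in> ?C" using step.hyps by (auto simp: compo_def adj_def)
    then have "adj R b c" using CR by (auto simp: adj_def)
    then show ?case using step by auto
  qed
  have 2: "(adj G)\<^sup>*\<^sup>* x w" if "(adj R)\<^sup>*\<^sup>* x w" for w
    using that
  proof (induction rule: rtranclp_induct)
    case base then show ?case by simp
  next
    case (step b c)
    have "b \<in> verts ?C" using reach_verts[OF GP x step.IH] .
    then have "{b, c} \<in> G" using cl step.hyps(2) by (auto simp: adj_def)
    then have "adj G b c" by (simp add: adj_def)
    then show ?case using step.IH by (rule rtranclp.rtrancl_into_rtrancl[rotated])
  qed
  have "compo R x = ?C"
  proof
    show "compo R x \<subseteq> ?C"
    proof
      fix e assume e: "e \<in> compo R x"
      then have eR: "e \<in> R" and r: "\<forall>w\<in>e. (adj G)\<^sup>*\<^sup>* x w" using 2 by (auto simp: compo_def)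
      obtain w where w: "w \<in> e" using ne eR by blast
      have "w \<in> verts ?C" using reach_verts[OF GP x] r w by blast
      then have "e \<in> G" using cl eR w by blast
      then show "e \<in> ?C" using r by (auto simp: compo_def)
    qed
  next
    show "?C \<subseteq> compo R x" using CR 1 by (auto simp: compo_def)
  qed
  then show ?thesis using compo_in_comps[OF xR] by simp
qed

lemma lam_ge: "finite E \<Longrightarrow> C \<in> comps E \<Longrightarrow> card C \<le> lam E"
proof -
  assume f: "finite E" and C: "C \<in> comps E"
  have "comps E \<subseteq> Pow E" using comps_sub by blast
  then have "finite (comps E)" using f finite_subset by blast
  then show ?thesis unfolding lam_def using C by (intro Max_ge) auto
qed

lemma span:
  assumes GP: "G \<subseteq> PathZ" and r: "(adj G)\<^sup>*\<^sup>* a b"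
  shows "min a b \<le> i \<Longrightarrow> i < max a b \<Longrightarrow> {i, i+1} \<in> G"
  using r
proof (induction arbitrary: i rule: rtranclp_induct)
  case base then show ?case by simp
next
  case (step b c)
  have e: "{b, c} \<in> G" using step.hyps(2) by (simp add: adj_def)
  then have bc: "c = b + 1 \<or> c = b - 1" using GP PathZ_edge2 by blast
  then have "(min a b \<le> i \<and> i < max a b) \<or> i = min b c" using step.prems by auto
  then show ?case
  proof
    assume "i = min b c"
    then have "{i, i+1} = {b, c}" using bc by auto
    then show ?thesis using e by simp
  qed (use step.IH in auto)
qed

lemma reach_fwd:
  assumes "(adj G)\<^sup>*\<^sup>* x u" "\<And>i. u \<le> i \<Longrightarrow> i < w \<Longrightarrow> {i, i+1} \<in> G"
  shows "u \<le> i \<Longrightarrow> i \<le> w \<Longrightarrow> (adj G)\<^sup>*\<^sup>* x i"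
proof (induction i rule: int_ge_induct)
  case base then show ?case using assms(1) by simp
next
  case (step i)
  then have "{i, i+1} \<in> G" using assms(2) by auto
  then have "adj G i (i+1)" by (simp add: adj_def)
  then show ?case using step by auto
qed

lemma finite_verts: "finite C \<Longrightarrow> C \<subseteq> PathZ \<Longrightarrow> finite (verts C)"
  unfolding verts_def by (rule finite_Union) (auto simp: PathZ_def)

lemma dist_le_card:
  assumes GP: "G \<subseteq> PathZ" and fin: "finite G" and x: "x \<in> verts G"
    and u: "u \<in> verts (compo G x)" and w: "w \<in> verts (compo G x)"
  shows "\<bar>u - w\<bar> \<le> int (card (compo G x))"
proof -
  have gen: "w' - u' \<le> int (card (compo G x))" 
    if u': "u' \<in> verts (compo G x)" and w': "w' \<in> verts (compo G x)" and le: "u' \<le> w'" for u' w'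
  proof -
    have xu: "(adj G)\<^sup>*\<^sup>* x u'" using verts_reach u' by blast
    have xw: "(adj G)\<^sup>*\<^sup>* x w'" using verts_reach w' by blast
    have uw: "(adj G)\<^sup>*\<^sup>* u' w'" using reach_sym[OF xu] xw by simp
    have eG: "{i, i+1} \<in> G" if "u' \<le> i" "i < w'" for i
      using span[OF GP uw, of i] that le by auto
    have sub: "(\<lambda>i. {i, i+1}) ` {u'..<w'} \<subseteq> compo G x"
    proof
      fix e assume "e \<in> (\<lambda>i. {i, i+1}) ` {u'..<w'}"
      then obtain i where i: "u' \<le> i" "i < w'" "e = {i, i+1}" by auto
      have "(adj G)\<^sup>*\<^sup>* x i" "(adj G)\<^sup>*\<^sup>* x (i+1)"
        using reach_fwd[OF xu eG] i by auto
      then show "e \<in> compo G x" using eG[OF i(1,2)] i(3) by (auto simp: compo_def)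
    qed
    have inj: "inj_on (\<lambda>i::int. {i, i+1}) {u'..<w'}"
      by (auto simp: inj_on_def doubleton_eq_iff)
    have "card ((\<lambda>i. {i, i+1}) ` {u'..<w'}) \<le> card (compo G x)"
      using sub fin compo_sub finite_subset by (metis card_mono)
    then have "card {u'..<w'} \<le> card (compo G x)" using card_image[OF inj] by simp
    then show ?thesis using le by simp
  qed
  show ?thesis using gen[OF u w] gen[OF w u] by (cases "u \<le> w") auto
qed

lemma mid_le:
  assumes GP: "G \<subseteq> PathZ" and fin: "finite G" and x: "x \<in> verts G"
    and v: "v \<in> verts (compo G x)"
  shows "\<bar>real_of_int v - midpt (compo G x)\<bar> \<le> real (card (compo G x)) / 2"
proof -
  let ?C = "compo G x"
  have fC: "finite (verts ?C)"
    using finite_verts[of ?C] compo_sub[of G x] GP fin finite_subset by blast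
  have ne: "verts ?C \<noteq> {}" using v by auto
  have mi: "Min (verts ?C) \<in> verts ?C" "Max (verts ?C) \<in> verts ?C" using fC ne by auto
  have le: "Min (verts ?C) \<le> v" "v \<le> Max (verts ?C)" using fC v by auto
  have "\<bar>Max (verts ?C) - Min (verts ?C)\<bar> \<le> int (card ?C)"
    using dist_le_card[OF GP fin x mi(2) mi(1)] .
  then have "real_of_int (Max (verts ?C)) - real_of_int (Min (verts ?C)) \<le> real (card ?C)"
    by linarith
  moreover have "real_of_int (Min (verts ?C)) \<le> real_of_int v" "real_of_int v \<le> real_of_int (Max (verts ?C))"
    using le by auto
  ultimately show ?thesis unfolding midpt_def by (auto simp: abs_if field_simps)
qed


lemma verts_UN: "verts (\<Union>j\<in>A. G j) = (\<Union>j\<in>A. verts (G j))"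
  by (auto simp: verts_def)

lemma verts_mono: "A \<subseteq> B \<Longrightarrow> verts A \<subseteq> verts B"
  by (auto simp: verts_def)

lemma ominus_sub: "ominus G F \<subseteq> G"
  by (auto simp: ominus_def dest: comps_sub)

lemma lam_ominus:
  assumes C: "C \<in> comps G" and GP: "G \<subseteq> PathZ" and fin: "finite G"
    and dis: "verts C \<inter> verts F = {}"
  shows "card C \<le> lam (ominus G F)"
proof -
  obtain x where x: "x \<in> verts G" and Cx: "C = compo G x" using C by (auto simp: comps_compo)
  have sub: "C \<subseteq> ominus G F" using C dis by (auto simp: ominus_def)
  have ne: "\<forall>e\<in>ominus G F. e \<noteq> {}" using ominus_sub GP by (fastforce simp: PathZ_def)
  have "C \<in> comps (ominus G F)"
  proof -
    have cl: "\<forall>e\<in>ominus G F. e \<inter> verts (compo G x) \<noteq> {} \<longrightarrow> e \<in> G"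
      using ominus_sub[of G F] by blast
    show ?thesis unfolding Cx by (rule compo_transfer[OF GP x]) (use sub ne cl Cx in auto)
  qed
  then show ?thesis using lam_ge fin ominus_sub finite_subset by metis
qed

definition cyc :: "nat \<Rightarrow> nat \<Rightarrow> nat \<Rightarrow> nat" where
  "cyc a b j = (if j = a then b else if a < j \<and> j \<le> b then j - 1 else j)"

lemma cyc_permutes: assumes ab: "a \<le> b" shows "cyc a b permutes {a..b}"
proof (rule bij_imp_permutes)
  show "bij_betw (cyc a b) {a..b} {a..b}"
    by (rule bij_betw_byWitness[where f'="\<lambda>j. if j = b then a else if a \<le> j \<and> j < b then j + 1 else j"])
       (use ab in \<open>auto simp: cyc_def\<close>)
next
  fix x assume "x \<notin> {a..b}" then show "cyc a b x = x" using ab by (auto simp: cyc_def)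
qed

definition good :: "(nat \<Rightarrow> graph) \<Rightarrow> nat \<Rightarrow> (nat \<Rightarrow> nat) \<Rightarrow> nat \<Rightarrow> bool" where
  "good G n \<pi> w \<longleftrightarrow> \<pi> permutes {1..n} \<and> (\<forall>j. j - 1 \<le> \<pi> j) \<and> w \<le> vlam (G \<circ> \<pi>) n"

lemma good_id: "good G n id 0"
  by (simp add: good_def permutes_id)

lemma good_mono:
  assumes "good G n \<pi> w" "n \<le> n'" shows "good G n' \<pi> w"
proof -
  have "vlam (G \<circ> \<pi>) n \<le> vlam (G \<circ> \<pi>) n'"
    unfolding vlam_def using assms(2) by (intro sum_mono2) auto
  moreover have "\<pi> permutes {1..n'}" using assms permutes_subset[of \<pi> "{1..n}" "{1..n'}"]
    by (auto simp: good_def)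
  ultimately show ?thesis using assms by (auto simp: good_def)
qed

lemma good_ext:
  assumes a1: "1 \<le> a" and ab: "a \<le> b" and g: "good G (a - 1) \<pi> w"
    and C: "C \<in> comps (G b)" and fin: "finite (G b)" and GP: "G b \<subseteq> PathZ"
    and dis: "verts C \<inter> verts (\<Union>j\<in>{1..<a}. G j) = {}"
  shows "good G b (cyc a b \<circ> \<pi>) (w + card C)"
proof -
  let ?s = "cyc a b \<circ> \<pi>"
  have pp: "\<pi> permutes {1..a-1}" and sh: "\<forall>j. j - 1 \<le> \<pi> j" and wv: "w \<le> vlam (G \<circ> \<pi>) (a-1)"
    using g by (auto simp: good_def)
  have pin: "\<pi> j \<in> {1..a-1} \<longleftrightarrow> j \<in> {1..a-1}" for j using permutes_in_image[OF pp] .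
  have pout: "j \<notin> {1..a-1} \<Longrightarrow> \<pi> j = j" for j using pp by (auto simp: permutes_def)
  have perm: "?s permutes {1..b}"
  proof (rule permutes_compose)
    show "\<pi> permutes {1..b}" by (rule permutes_subset[OF pp]) (use ab in auto)
    show "cyc a b permutes {1..b}" by (rule permutes_subset[OF cyc_permutes[OF ab]]) (use a1 in auto)
  qed
  have eq: "?s j = \<pi> j" if "j < a" for j
  proof (cases "j \<in> {1..a-1}")
    case True then have "\<pi> j \<in> {1..a-1}" using pin by blast
    then show ?thesis by (auto simp: cyc_def)
  next
    case False then have "\<pi> j = j" using pout by blast
    then show ?thesis using that by (auto simp: cyc_def)
  qed
  have shift: "\<forall>j. j - 1 \<le> ?s j"
  proof
    fix j show "j - 1 \<le> ?s j"
    proof (cases "j < a")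
      case True then show ?thesis using eq sh by simp
    next
      case False then have "\<pi> j = j" using pout[of j] a1 by auto
      then show ?thesis using ab by (auto simp: cyc_def)
    qed
  qed
  have "\<pi> a = a" using pout[of a] a1 by auto
  then have sa: "?s a = b" by (auto simp: cyc_def)
  have img: "\<pi> ` {1..<a} = {1..<a}"
  proof -
    have "{1..<a} = {1..a-1}" using a1 by auto
    then show ?thesis using permutes_image[OF pp] by simp
  qed
  have red_a: "reduced (G \<circ> ?s) a = ominus (G b) (\<Union>j\<in>{1..<a}. G j)"
  proof -
    have "(\<Union>j\<in>{1..<a}. (G \<circ> ?s) j) = (\<Union>j\<in>{1..<a}. G (\<pi> j))" using eq by auto
    also have "\<dots> = (\<Union>j\<in>\<pi> ` {1..<a}. G j)" by simp
    also have "\<dots> = (\<Union>j\<in>{1..<a}. G j)" using img by simp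
    finally show ?thesis unfolding reduced_def using sa by simp
  qed
  have red_lt: "reduced (G \<circ> ?s) l = reduced (G \<circ> \<pi>) l" if "l \<le> a - 1" for l
  proof -
    have "(\<Union>j\<in>{1..<l}. (G \<circ> ?s) j) = (\<Union>j\<in>{1..<l}. (G \<circ> \<pi>) j)" using eq that a1 by (intro SUP_cong refl) auto
    moreover have "(G \<circ> ?s) l = (G \<circ> \<pi>) l" using eq that a1 by auto
    ultimately show ?thesis unfolding reduced_def by simp
  qed
  have lamC: "card C \<le> lam (reduced (G \<circ> ?s) a)"
    unfolding red_a using lam_ominus[OF C GP fin dis] .
  have "vlam (G \<circ> \<pi>) (a-1) + card C \<le> (\<Sum>l\<in>{1..a-1}. lam (reduced (G \<circ> ?s) l)) + lam (reduced (G \<circ> ?s) a)"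
    unfolding vlam_def using red_lt lamC by simp
  also have "\<dots> = (\<Sum>l\<in>insert a {1..a-1}. lam (reduced (G \<circ> ?s) l))"
    using a1 by simp
  also have "\<dots> \<le> vlam (G \<circ> ?s) b"
    unfolding vlam_def using a1 ab by (intro sum_mono2) auto
  finally have "w + card C \<le> vlam (G \<circ> ?s) b" using wv by simp
  then show ?thesis using perm shift by (simp add: good_def)
qed


lemma chain:
  fixes G :: "nat \<Rightarrow> graph" and m :: nat
  assumes fin: "\<And>j. j \<in> {1..m} \<Longrightarrow> finite (G j) \<and> G j \<subseteq> PathZ"
    and ct_def: "ct = (\<lambda>v. LEAST j. j \<in> {1..m} \<and> v \<in> verts (G j))"
    and R_def: "R = (\<Union>j\<in>{1..m}. reduced G j)"
    and L_def: "L = Max (insert 0 ((\<lambda>j. lam (G j)) ` {1..m}))"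
  shows "\<forall>v. ct v = T \<longrightarrow> (\<exists>j\<in>{1..m}. v \<in> verts (G j)) \<longrightarrow>
     (\<exists>\<pi>1 \<pi>2 w1 w2 C'. good G T \<pi>1 w1 \<and> good G (T - 1) \<pi>2 w2 \<and> C' \<in> comps R \<and>
        1 \<le> card C' \<and> card C' \<le> L \<and>
        \<bar>real_of_int v - midpt C'\<bar> \<le> real w1 + real w2 + real (card C') / 2) \<and> T \<le> m"
proof (induction T rule: less_induct)
  case (less T)
  have ctP: "ct u \<in> {1..m} \<and> u \<in> verts (G (ct u))" if "\<exists>j\<in>{1..m}. u \<in> verts (G j)" for u
  proof -
    from that obtain j where "j \<in> {1..m} \<and> u \<in> verts (G j)" by blast
    then show ?thesis unfolding ct_def by (rule LeastI)
  qed
  have ctmin: "ct u \<le> j" if "j \<in> {1..m}" "u \<in> verts (G j)" for u j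
    unfolding ct_def by (rule Least_le) (use that in auto)
  show ?case
  proof (intro allI impI)
    fix v assume ctv: "ct v = T" and vV: "\<exists>j\<in>{1..m}. v \<in> verts (G j)"
    have Tm: "T \<in> {1..m}" and vT: "v \<in> verts (G T)" using ctP[OF vV] ctv by auto
    have finT: "finite (G T)" and GP: "G T \<subseteq> PathZ" using fin[OF Tm] by auto
    define C where "C = compo (G T) v"
    have vC: "v \<in> verts C" unfolding C_def using reach_verts[OF GP vT] by simp
    have Ccomp: "C \<in> comps (G T)" unfolding C_def using compo_in_comps[OF vT] .
    have finC: "finite C" unfolding C_def using compo_sub finT finite_subset by metis
    have "C \<noteq> {}" using vC by (auto simp: verts_def)
    then have c1: "1 \<le> card C" using finC by (simp add: Suc_le_eq card_gt_0_iff)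
    have cL: "card C \<le> L"
    proof -
      have "card C \<le> lam (G T)" using lam_ge[OF finT Ccomp] .
      also have "\<dots> \<le> L" unfolding L_def using Tm by (intro Max_ge) auto
      finally show ?thesis .
    qed
    have CT: "verts C \<subseteq> verts (G T)" unfolding C_def using verts_mono[OF compo_sub] .
    show "(\<exists>\<pi>1 \<pi>2 w1 w2 C'. good G T \<pi>1 w1 \<and> good G (T - 1) \<pi>2 w2 \<and> C' \<in> comps R \<and>
        1 \<le> card C' \<and> card C' \<le> L \<and>
        \<bar>real_of_int v - midpt C'\<bar> \<le> real w1 + real w2 + real (card C') / 2) \<and> T \<le> m"
    proof (cases "verts C \<inter> verts (\<Union>j\<in>{1..<T}. G j) = {}")
      case True
      have CR: "C \<subseteq> R"
      proof -
        have "C \<subseteq> reduced G T" unfolding reduced_def using Ccomp True by (auto simp: ominus_def)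
        then show ?thesis unfolding R_def using Tm by auto
      qed
      have ne: "\<forall>e\<in>R. e \<noteq> {}"
      proof
        fix e assume "e \<in> R"
        then obtain j where "j \<in> {1..m}" "e \<in> G j" unfolding R_def reduced_def using ominus_sub by blast
        then show "e \<noteq> {}" using fin by (fastforce simp: PathZ_def)
      qed
      have cl: "\<forall>e\<in>R. e \<inter> verts C \<noteq> {} \<longrightarrow> e \<in> G T"
      proof (intro ballI impI)
        fix e assume eR: "e \<in> R" and ei: "e \<inter> verts C \<noteq> {}"
        then obtain j where j: "j \<in> {1..m}" and ej: "e \<in> reduced G j" unfolding R_def by blast
        then obtain D where D: "D \<in> comps (G j)" "e \<in> D"
          and Dd: "verts D \<inter> verts (\<Union>i\<in>{1..<j}. G i) = {}"
          unfolding reduced_def ominus_def by blast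
        obtain b where b: "b \<in> e" "b \<in> verts C" using ei by blast
        have bD: "b \<in> verts D" using D b by (auto simp: verts_def)
        have bj: "b \<in> verts (G j)" using bD verts_mono[OF comps_sub[OF D(1)]] by blast
        have "j = T"
        proof (rule ccontr)
          assume "j \<noteq> T"
          then consider "j < T" | "T < j" by linarith
          then show False
          proof cases
            case 1
            then have "b \<in> verts (\<Union>j\<in>{1..<T}. G j)" using j bj by (auto simp: verts_UN)
            then show False using True b by blast
          next
            case 2
            then have "b \<in> verts (\<Union>i\<in>{1..<j}. G i)" using Tm b CT by (auto simp: verts_UN)
            then show False using Dd bD by blast
          qed
        qed
        then show "e \<in> G T" using D comps_sub by blast
      qed
      have "C \<in> comps R" unfolding C_def
        by (rule compo_transfer[OF GP vT]) (use CR ne cl in \<open>auto simp: C_def\<close>)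
      moreover have "\<bar>real_of_int v - midpt C\<bar> \<le> real (card C) / 2"
        unfolding C_def by (rule mid_le[OF GP finT vT]) (use vC C_def in simp)
      ultimately show ?thesis using c1 cL good_id Tm
        by (metis add_0 atLeastAtMost_iff of_nat_0)
    next
      case False
      then obtain u j where u: "u \<in> verts C" and j: "j \<in> {1..<T}" "u \<in> verts (G j)"
        unfolding verts_UN by blast
      obtain v1 where v1: "v1 \<in> verts C" and v1min: "\<forall>y. y \<in> verts C \<longrightarrow> ct v1 \<le> ct y"
        using ex_has_least_nat[of "\<lambda>x. x \<in> verts C", OF u] by blast
      have jm: "j \<in> {1..m}" using j Tm by auto
      have "ct u \<le> j" using ctmin[OF jm j(2)] .
      then have T1T: "ct v1 < T" using v1min u j by fastforce
      have v1V: "\<exists>j\<in>{1..m}. v1 \<in> verts (G j)" using v1 CT Tm by blast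
      have T1m: "ct v1 \<in> {1..m}" using ctP[OF v1V] by blast
      from less.IH[OF T1T, rule_format, OF refl v1V]
      obtain \<pi>1 \<pi>2 w1 w2 C' where g1: "good G (ct v1) \<pi>1 w1" and g2: "good G (ct v1 - 1) \<pi>2 w2"
        and C'R: "C' \<in> comps R" and c1': "1 \<le> card C'" and cL': "card C' \<le> L"
        and d1: "\<bar>real_of_int v1 - midpt C'\<bar> \<le> real w1 + real w2 + real (card C') / 2"
        by blast
      have dis: "verts C \<inter> verts (\<Union>i\<in>{1..<ct v1}. G i) = {}"
      proof (rule ccontr)
        assume "verts C \<inter> verts (\<Union>i\<in>{1..<ct v1}. G i) \<noteq> {}"
        then obtain w i where w: "w \<in> verts C" "i \<in> {1..<ct v1}" "w \<in> verts (G i)"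
          unfolding verts_UN by blast
        have "i \<in> {1..m}" using w(2) T1m by auto
        then have "ct w \<le> i" using ctmin w(3) by blast
        then show False using v1min w by fastforce
      qed
      have gA: "good G T (cyc (ct v1) T \<circ> \<pi>2) (w2 + card C)"
        by (rule good_ext[OF _ _ g2 Ccomp finT GP dis]) (use T1m T1T in auto)
      have gB: "good G (T - 1) \<pi>1 w1" using good_mono[OF g1] T1T by simp
      have dvv: "\<bar>v - v1\<bar> \<le> int (card C)"
        unfolding C_def by (rule dist_le_card[OF GP finT vT]) (use vC v1 C_def in auto)
      have "\<bar>real_of_int v - midpt C'\<bar> \<le> real (w2 + card C) + real w1 + real (card C') / 2"
      proof -
        have "\<bar>real_of_int v - real_of_int v1\<bar> \<le> real (card C)" using dvv
          by (metis of_int_abs of_int_diff of_int_le_iff of_int_of_nat_eq)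
        then show ?thesis using d1 by simp
      qed
      then have "\<bar>real_of_int v - midpt C'\<bar> \<le> real (w2 + card C) + real w1 + real (card C') / 2" .
      then show ?thesis using gA gB C'R c1' cL' Tm by (intro conjI exI[of _ "cyc (ct v1) T \<circ> \<pi>2"] exI[of _ \<pi>1] exI[of _ "w2 + card C"] exI[of _ w1] exI[of _ C']) auto
    qed
  qed
qed


theorem lemma5p9:
  fixes k m :: nat and G :: "nat \<Rightarrow> graph"
  assumes "k > 0"
    and "\<And>j. j \<in> {1..m} \<Longrightarrow> finite (G j) \<and> G j \<subseteq> PathZ"
    and "(\<Union>j\<in>{1..m}. G j) = Path_k k"
  shows "\<exists>\<sigma>. shift_perm m \<sigma> \<and>
    real (vlam (G \<circ> \<sigma>) m) \<ge> (gap k G m - real (Max (insert 0 ((\<lambda>j. lam (G j)) ` {1..m})))) / 2"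
proof -
  define ct where "ct = (\<lambda>v. LEAST j. j \<in> {1..m} \<and> v \<in> verts (G j))"
  define R where "R = (\<Union>j\<in>{1..m}. reduced G j)"
  define L where "L = Max (insert 0 ((\<lambda>j. lam (G j)) ` {1..m}))"
  note ch = chain[OF assms(2) ct_def R_def L_def]
  define S where "S = {\<sigma>. shift_perm m \<sigma>}"
  have finS: "finite S"
    using finite_permutations[of "{1..m}"] by (rule finite_subset[rotated]) (auto simp: S_def shift_perm_def)
  have idS: "id \<in> S" by (simp add: S_def shift_perm_def permutes_id)
  define W where "W = Max ((\<lambda>\<sigma>. vlam (G \<circ> \<sigma>) m) ` S)"
  obtain \<sigma>0 where s0: "\<sigma>0 \<in> S" "vlam (G \<circ> \<sigma>0) m = W"
  proof -
    have "W \<in> (\<lambda>\<sigma>. vlam (G \<circ> \<sigma>) m) ` S" unfolding W_def using finS idS by (intro Max_in) auto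
    then show ?thesis using that by auto
  qed
  have gW: "w \<le> W" if "good G n \<pi> w" "n \<le> m" for n \<pi> w
  proof -
    have "good G m \<pi> w" using good_mono that by blast
    then have "\<pi> \<in> S" and "w \<le> vlam (G \<circ> \<pi>) m" by (auto simp: good_def S_def shift_perm_def)
    moreover have "vlam (G \<circ> \<pi>) m \<le> W" unfolding W_def using finS \<open>\<pi> \<in> S\<close> by (intro Max_ge) auto
    ultimately show ?thesis by simp
  qed
  have bound: "(INF C\<in>comps R. \<bar>midpt C - y\<bar>) \<le> 2 * real W + real L" if y: "y \<in> {0..real k}" for y
  proof -
    define v where "v = \<lfloor>y + 1/2\<rfloor>"
    have v0: "0 \<le> v" and vk: "v \<le> int k" using y unfolding v_def by (auto intro: floor_le_iff[THEN iffD2])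
    have vy: "\<bar>real_of_int v - y\<bar> \<le> 1/2" unfolding v_def
      using floor_le_iff[of "y + 1/2"] by linarith
    have "v \<in> verts (Path_k k)"
    proof (cases "v = 0")
      case True
      then have "{v, v+1} \<in> Path_k k" using assms(1)
        unfolding Path_k_def Path_st_def by (intro CollectI exI[of _ 1]) auto
      then show ?thesis by (auto simp: verts_def)
    next
      case False
      then have "{v - 1, v} \<in> Path_k k" using v0 vk
        unfolding Path_k_def Path_st_def by (intro CollectI exI[of _ v]) auto
      then show ?thesis by (auto simp: verts_def)
    qed
    then have vV: "\<exists>j\<in>{1..m}. v \<in> verts (G j)" using assms(3) verts_UN[of G "{1..m}"] by auto
    have chv: "(\<exists>\<pi>1 \<pi>2 w1 w2 C'. good G (ct v) \<pi>1 w1 \<and> good G (ct v - 1) \<pi>2 w2 \<and> C' \<in> comps R \<and>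
        1 \<le> card C' \<and> card C' \<le> L \<and>
        \<bar>real_of_int v - midpt C'\<bar> \<le> real w1 + real w2 + real (card C') / 2) \<and> ct v \<le> m"
      using ch[of "ct v"] vV by blast
    from chv obtain \<pi>1 \<pi>2 w1 w2 C' where g1: "good G (ct v) \<pi>1 w1" and g2: "good G (ct v - 1) \<pi>2 w2"
      and C'R: "C' \<in> comps R" and c1: "1 \<le> card C'" and cL: "card C' \<le> L"
      and d: "\<bar>real_of_int v - midpt C'\<bar> \<le> real w1 + real w2 + real (card C') / 2"
      and Tm: "ct v \<le> m" by blast
    have "w1 \<le> W" "w2 \<le> W" using gW[OF g1 Tm] gW[OF g2] Tm by auto
    have "(INF C\<in>comps R. \<bar>midpt C - y\<bar>) \<le> \<bar>midpt C' - y\<bar>"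
      by (rule cINF_lower[OF _ C'R]) (auto intro: bdd_belowI[of _ 0])
    also have "\<dots> \<le> real w1 + real w2 + real (card C') / 2 + 1/2" using d vy by linarith
    also have "\<dots> \<le> 2 * real W + real L"
      using \<open>w1 \<le> W\<close> \<open>w2 \<le> W\<close> c1 cL by linarith
    finally show ?thesis .
  qed
  have "gap k G m \<le> 2 * real W + real L"
    unfolding gap_def R_def[symmetric] by (rule cSUP_least) (use bound in auto)
  then show ?thesis using s0 unfolding L_def[symmetric] S_def by (intro exI[of _ \<sigma>0]) auto
qed

end
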